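(* In the Ewens setting, $W(1,0)=\theta$, and for every $N\ge2$: $$W(N,0)=(N-1)\,W(N-1,0),$$ $$W(N,k)=(N-1)\,W(N-1,k)+\frac{(N-2)!}{(k-1)!}\,\theta\,[k]_\theta\qquad\text{for }1\le k\le N-1,$$ where $W(N-1,N-1):=0$.
   Context: Permutations of $\{1,\dots,N\}$ are written in one-line notation; $\mathfrak S_N$ is the set of all of them. An entry $\pi_j$ is a left-to-right maximum if $\pi_j>\pi_i$ for all $i<j$; $\mathrm{lrm}(\pi)$ is the number of left-to-right maxima of $\pi$. Let $\theta>0$ (or $\theta$ an indeterminate). For $0\le k\le N-1$, a permutation $\pi\in\mathfrak S_N$ is $k$-winnable if the first index $j>k$ such that $\pi_j$ is a left-to-right maximum satisfies $\pi_j=N$. Equivalently, $\pi$ is won by the strategy that rejects the first $k$ candidates and accepts the next left-to-right maximum. Ewens setting: $W(N,k)=\sum_{k\text{-winnable }\pi\in\mathfrak S_N}\theta^{\mathrm{lrm}(\pi)}$, with $W(N,N):=0$, and $[m]_\theta=\theta(\theta+1)\cdots(\theta+m-1)$ with $[0]_\theta=1$. *)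

theory Defs
  imports Complex_Main "HOL-Combinatorics.Permutations"
begin

text \<open>A permutation of {1..N} in one-line notation is a function p with p permutes {1..N};
  the j-th entry is p j.\<close>

definition is_lrm :: "(nat \<Rightarrow> nat) \<Rightarrow> nat \<Rightarrow> bool" where
  "is_lrm p j \<longleftrightarrow> (\<forall>i. 1 \<le> i \<and> i < j \<longrightarrow> p i < p j)"

definition lrm :: "nat \<Rightarrow> (nat \<Rightarrow> nat) \<Rightarrow> nat" where
  "lrm N p = card {j \<in> {1..N}. is_lrm p j}"

definition winnable :: "nat \<Rightarrow> nat \<Rightarrow> (nat \<Rightarrow> nat) \<Rightarrow> bool" where
  "winnable N k p \<longleftrightarrow>
     (\<exists>j. k < j \<and> j \<le> N \<and> is_lrm p j \<and> p j = N \<and>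
          (\<forall>i. k < i \<and> i < j \<longrightarrow> \<not> is_lrm p i))"

definition W :: "real \<Rightarrow> nat \<Rightarrow> nat \<Rightarrow> real" where
  "W \<theta> N k = (if N \<le> k then 0
     else (\<Sum>p \<in> {p. p permutes {1..N} \<and> winnable N k p}. \<theta> ^ lrm N p))"

end

theory Submission imports Defs begin

definition shift :: "nat \<Rightarrow> nat \<Rightarrow> nat" where
  "shift v x = (if v \<le> x then Suc x else x)"

lemma shift_less_iff: "shift v x < shift v y \<longleftrightarrow> x < y"
  by (auto simp: shift_def)

lemma shift_inj: "shift v x = shift v y \<longleftrightarrow> x = y"
  by (auto simp: shift_def)

lemma shift_ne: "shift v x \<noteq> v"
  by (auto simp: shift_def)

definition ins :: "nat \<Rightarrow> nat \<Rightarrow> (nat \<Rightarrow> nat) \<Rightarrow> nat \<Rightarrow> nat" where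
  "ins n v \<sigma> = (\<lambda>i. if i = Suc n then v else if i \<in> {1..n} then shift v (\<sigma> i) else i)"

lemma ins_permutes:
  assumes s: "\<sigma> permutes {1..n}" and v: "v \<in> {1..Suc n}"
  shows "ins n v \<sigma> permutes {1..Suc n}"
proof (rule bij_imp_permutes)
  have inj: "inj_on (ins n v \<sigma>) {1..Suc n}"
  proof (rule inj_onI)
    fix x y assume x: "x \<in> {1..Suc n}" and y: "y \<in> {1..Suc n}" and e: "ins n v \<sigma> x = ins n v \<sigma> y"
    show "x = y"
    proof (cases "x = Suc n \<or> y = Suc n")
      case True
      then show ?thesis using e x y shift_ne[of v] by (auto simp: ins_def split: if_splits) (metis shift_ne)+
    next
      case False
      then have "x \<in> {1..n}" "y \<in> {1..n}" using x y by auto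
      then have "\<sigma> x = \<sigma> y" using e False by (auto simp: ins_def shift_inj)
      then show ?thesis using permutes_inj[OF s] by (auto dest: injD)
    qed
  qed
  have img: "ins n v \<sigma> ` {1..Suc n} \<subseteq> {1..Suc n}"
  proof
    fix y assume "y \<in> ins n v \<sigma> ` {1..Suc n}"
    then obtain x where x: "x \<in> {1..Suc n}" and y: "y = ins n v \<sigma> x" by auto
    show "y \<in> {1..Suc n}"
    proof (cases "x = Suc n")
      case True then show ?thesis using v y by (simp add: ins_def)
    next
      case False
      then have "x \<in> {1..n}" using x by auto
      then have "\<sigma> x \<in> {1..n}" using permutes_in_image[OF s] by blast
      then show ?thesis using y False \<open>x \<in> {1..n}\<close> by (auto simp: ins_def shift_def)
    qed
  qed
  have "ins n v \<sigma> ` {1..Suc n} = {1..Suc n}" using endo_inj_surj[OF _ img inj] by simp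
  then show "bij_betw (ins n v \<sigma>) {1..Suc n} {1..Suc n}" using inj by (simp add: bij_betw_def)
  show "\<And>x. x \<notin> {1..Suc n} \<Longrightarrow> ins n v \<sigma> x = x" by (auto simp: ins_def)
qed

lemma ins_inj:
  assumes s: "\<sigma> permutes {1..n}" and s': "\<sigma>' permutes {1..n}"
    and e: "ins n v \<sigma> = ins n v' \<sigma>'"
  shows "v = v' \<and> \<sigma> = \<sigma>'"
proof -
  have vv: "v = v'" using fun_cong[OF e, of "Suc n"] by (simp add: ins_def)
  have "\<sigma> i = \<sigma>' i" for i
  proof (cases "i \<in> {1..n}")
    case True
    then have "i \<noteq> Suc n" by auto
    then show ?thesis using fun_cong[OF e, of i] True vv by (simp add: ins_def shift_inj)
  next
    case False then show ?thesis using permutes_not_in[OF s] permutes_not_in[OF s'] by simp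
  qed
  then show ?thesis using vv by auto
qed

lemma ins_bij:
  "bij_betw (\<lambda>(v,\<sigma>). ins n v \<sigma>) ({1..Suc n} \<times> {\<sigma>. \<sigma> permutes {1..n}}) {p. p permutes {1..Suc n}}"
proof -
  let ?f = "\<lambda>(v,\<sigma>). ins n v \<sigma>"
  let ?A = "{1..Suc n} \<times> {\<sigma>. \<sigma> permutes {1..n}}"
  have inj: "inj_on ?f ?A"
  proof (rule inj_onI)
    fix x y assume "x \<in> ?A" "y \<in> ?A" "?f x = ?f y"
    then show "x = y" using ins_inj[of "snd x" n "snd y" "fst x" "fst y"] by (auto simp: case_prod_beta prod_eq_iff)
  qed
  have sub: "?f ` ?A \<subseteq> {p. p permutes {1..Suc n}}"
  proof
    fix p assume "p \<in> ?f ` ?A"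
    then obtain v \<sigma> where "v \<in> {1..Suc n}" "\<sigma> permutes {1..n}" "p = ins n v \<sigma>" by auto
    then show "p \<in> {p. p permutes {1..Suc n}}" using ins_permutes by blast
  qed
  have fin: "finite {p. p permutes {1..Suc n}}" by (rule finite_permutations) simp
  have "card (?f ` ?A) = card ?A" using card_image[OF inj] .
  also have "\<dots> = Suc n * fact n" by (simp add: card_cartesian_product card_permutations)
  also have "\<dots> = card {p. p permutes {1..Suc n}}" by (simp add: card_permutations)
  finally have "?f ` ?A = {p. p permutes {1..Suc n}}" using card_subset_eq[OF fin sub] by simp
  then show ?thesis using inj by (simp add: bij_betw_def)
qed

lemma sum_perm_Suc:
  fixes g :: "(nat \<Rightarrow> nat) \<Rightarrow> real"
  shows "(\<Sum>p\<in>{p. p permutes {1..Suc n}}. g p) = (\<Sum>v\<in>{1..Suc n}. \<Sum>\<sigma>\<in>{\<sigma>. \<sigma> permutes {1..n}}. g (ins n v \<sigma>))"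
proof -
  have "(\<Sum>p\<in>{p. p permutes {1..Suc n}}. g p) = (\<Sum>x\<in>{1..Suc n} \<times> {\<sigma>. \<sigma> permutes {1..n}}. g ((\<lambda>(v,\<sigma>). ins n v \<sigma>) x))"
    by (rule sum.reindex_bij_betw[OF ins_bij, symmetric])
  also have "\<dots> = (\<Sum>v\<in>{1..Suc n}. \<Sum>\<sigma>\<in>{\<sigma>. \<sigma> permutes {1..n}}. g (ins n v \<sigma>))"
    by (subst sum.cartesian_product) (simp add: case_prod_beta)
  finally show ?thesis .
qed


lemma ins_val: "\<sigma> permutes {1..n} \<Longrightarrow> j \<in> {1..n} \<Longrightarrow> ins n v \<sigma> j = shift v (\<sigma> j)"
  by (auto simp: ins_def)

lemma is_lrm_ins:
  assumes s: "\<sigma> permutes {1..n}" and j: "j \<in> {1..n}"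
  shows "is_lrm (ins n v \<sigma>) j \<longleftrightarrow> is_lrm \<sigma> j"
proof -
  have "\<And>i. 1 \<le> i \<Longrightarrow> i < j \<Longrightarrow> (ins n v \<sigma> i < ins n v \<sigma> j) = (\<sigma> i < \<sigma> j)"
    using j by (simp add: ins_val[OF s] shift_less_iff)
  then show ?thesis unfolding is_lrm_def by auto
qed

lemma is_lrm_ins_last:
  assumes s: "\<sigma> permutes {1..n}" and v: "v \<in> {1..Suc n}"
  shows "is_lrm (ins n v \<sigma>) (Suc n) \<longleftrightarrow> v = Suc n"
proof
  assume "v = Suc n"
  then show "is_lrm (ins n v \<sigma>) (Suc n)" unfolding is_lrm_def
  proof (intro allI impI)
    fix i assume "v = Suc n" "1 \<le> i \<and> i < Suc n"
    then have "i \<in> {1..n}" by auto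
    then have "\<sigma> i \<in> {1..n}" using permutes_in_image[OF s] by blast
    then show "ins n v \<sigma> i < ins n v \<sigma> (Suc n)" using \<open>v = Suc n\<close> \<open>i \<in> {1..n}\<close>
      by (simp add: ins_val[OF s] shift_def) (simp add: ins_def)
  qed
next
  assume l: "is_lrm (ins n v \<sigma>) (Suc n)"
  show "v = Suc n"
  proof (rule ccontr)
    assume "v \<noteq> Suc n"
    then have vn: "v \<le> n" "1 \<le> n" using v by auto
    have "n \<in> {1..n}" using vn by auto
    then have "n \<in> \<sigma> ` {1..n}" using permutes_image[OF s] by simp
    then obtain i where i: "i \<in> {1..n}" "\<sigma> i = n" by auto
    have "ins n v \<sigma> i < ins n v \<sigma> (Suc n)" using l i unfolding is_lrm_def by auto
    then show False using i vn by (simp add: ins_val[OF s] shift_def) (simp add: ins_def)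
  qed
qed

lemma lrm_ins:
  assumes s: "\<sigma> permutes {1..n}" and v: "v \<in> {1..Suc n}"
  shows "lrm (Suc n) (ins n v \<sigma>) = lrm n \<sigma> + (if v = Suc n then 1 else 0)"
proof -
  have "{j \<in> {1..Suc n}. is_lrm (ins n v \<sigma>) j} =
        {j \<in> {1..n}. is_lrm \<sigma> j} \<union> (if v = Suc n then {Suc n} else {})"
    using is_lrm_ins[OF s] is_lrm_ins_last[OF s v] by (auto simp: le_Suc_eq)
  then show ?thesis unfolding lrm_def by (simp add: card_insert_if)
qed

lemma winnable_ins_low:
  assumes s: "\<sigma> permutes {1..n}" and v: "v \<in> {1..n}"
  shows "winnable (Suc n) k (ins n v \<sigma>) \<longleftrightarrow> winnable n k \<sigma>"
proof -
  have v': "v \<in> {1..Suc n}" using v by auto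
  have nl: "\<not> is_lrm (ins n v \<sigma>) (Suc n)" using is_lrm_ins_last[OF s v'] v by auto
  have val: "ins n v \<sigma> j = Suc n \<longleftrightarrow> \<sigma> j = n" if j: "j \<in> {1..n}" for j
  proof -
    have "\<sigma> j \<in> {1..n}" using permutes_in_image[OF s] j by blast
    then show ?thesis using v j by (auto simp: ins_val[OF s] shift_def)
  qed
  show ?thesis
  proof
    assume "winnable (Suc n) k (ins n v \<sigma>)"
    then obtain j where j: "k < j" "j \<le> Suc n" "is_lrm (ins n v \<sigma>) j" "ins n v \<sigma> j = Suc n"
      "\<forall>i. k < i \<and> i < j \<longrightarrow> \<not> is_lrm (ins n v \<sigma>) i" unfolding winnable_def by blast
    have "j \<noteq> Suc n" using j nl by auto
    then have jn: "j \<in> {1..n}" using j by auto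
    have "\<forall>i. k < i \<and> i < j \<longrightarrow> \<not> is_lrm \<sigma> i"
    proof (intro allI impI)
      fix i assume "k < i \<and> i < j"
      then have "i \<in> {1..n}" using jn by auto
      then show "\<not> is_lrm \<sigma> i" using j(5) \<open>k < i \<and> i < j\<close> is_lrm_ins[OF s] by blast
    qed
    then show "winnable n k \<sigma>" unfolding winnable_def
      using j jn is_lrm_ins[OF s jn] val[OF jn] by (intro exI[of _ j]) auto
  next
    assume "winnable n k \<sigma>"
    then obtain j where j: "k < j" "j \<le> n" "is_lrm \<sigma> j" "\<sigma> j = n"
      "\<forall>i. k < i \<and> i < j \<longrightarrow> \<not> is_lrm \<sigma> i" unfolding winnable_def by blast
    then have jn: "j \<in> {1..n}" by auto
    have "\<forall>i. k < i \<and> i < j \<longrightarrow> \<not> is_lrm (ins n v \<sigma>) i"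
    proof (intro allI impI)
      fix i assume "k < i \<and> i < j"
      then have "i \<in> {1..n}" using jn by auto
      then show "\<not> is_lrm (ins n v \<sigma>) i" using j(5) \<open>k < i \<and> i < j\<close> is_lrm_ins[OF s] by blast
    qed
    then show "winnable (Suc n) k (ins n v \<sigma>)" unfolding winnable_def
      using j jn is_lrm_ins[OF s jn] val[OF jn] by (intro exI[of _ j]) auto
  qed
qed

lemma winnable_ins_top:
  assumes s: "\<sigma> permutes {1..n}"
  shows "winnable (Suc n) k (ins n (Suc n) \<sigma>) \<longleftrightarrow> k < Suc n \<and> (\<forall>i. k < i \<and> i \<le> n \<longrightarrow> \<not> is_lrm \<sigma> i)"
proof -
  have v': "Suc n \<in> {1..Suc n}" by auto
  have top: "is_lrm (ins n (Suc n) \<sigma>) (Suc n)" using is_lrm_ins_last[OF s v'] by simp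
  show ?thesis
  proof
    assume "winnable (Suc n) k (ins n (Suc n) \<sigma>)"
    then obtain j where j: "k < j" "j \<le> Suc n" "ins n (Suc n) \<sigma> j = Suc n"
      "\<forall>i. k < i \<and> i < j \<longrightarrow> \<not> is_lrm (ins n (Suc n) \<sigma>) i" unfolding winnable_def by blast
    have "j = Suc n"
    proof (rule ccontr)
      assume "j \<noteq> Suc n"
      then have jn: "j \<in> {1..n}" using j by auto
      then have "\<sigma> j \<in> {1..n}" using permutes_in_image[OF s] by blast
      then show False using j(3) jn by (simp add: ins_val[OF s] shift_def)
    qed
    then show "k < Suc n \<and> (\<forall>i. k < i \<and> i \<le> n \<longrightarrow> \<not> is_lrm \<sigma> i)"
      using j is_lrm_ins[OF s] by (metis atLeastAtMost_iff less_Suc_eq_le less_imp_le_nat not_less_eq_eq Suc_leI less_nat_zero_code not_less0 le_less_trans zero_less_iff_neq_zero One_nat_def)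
  next
    assume h: "k < Suc n \<and> (\<forall>i. k < i \<and> i \<le> n \<longrightarrow> \<not> is_lrm \<sigma> i)"
    have "\<forall>i. k < i \<and> i < Suc n \<longrightarrow> \<not> is_lrm (ins n (Suc n) \<sigma>) i"
    proof (intro allI impI)
      fix i assume i: "k < i \<and> i < Suc n"
      then have "i \<in> {1..n}" by auto
      then show "\<not> is_lrm (ins n (Suc n) \<sigma>) i" using h i is_lrm_ins[OF s] by auto
    qed
    then show "winnable (Suc n) k (ins n (Suc n) \<sigma>)" unfolding winnable_def
      using h top by (intro exI[of _ "Suc n"]) (auto simp: ins_def)
  qed
qed


definition F :: "real \<Rightarrow> nat \<Rightarrow> nat \<Rightarrow> real" where
  "F \<theta> M k = (\<Sum>\<sigma>\<in>{\<sigma>. \<sigma> permutes {1..M}}.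
      if (\<forall>i. k < i \<and> i \<le> M \<longrightarrow> \<not> is_lrm \<sigma> i) then \<theta> ^ lrm M \<sigma> else 0)"

definition Ws :: "real \<Rightarrow> nat \<Rightarrow> nat \<Rightarrow> real" where
  "Ws \<theta> N k = (\<Sum>p\<in>{p. p permutes {1..N}}. if winnable N k p then \<theta> ^ lrm N p else 0)"

lemma split_top:
  fixes h :: "nat \<Rightarrow> real"
  shows "(\<Sum>v\<in>{1..Suc n}. h v) = h (Suc n) + (\<Sum>v\<in>{1..n}. h v)"
  by (simp add: sum.atLeast_Suc_atMost_Suc_shift)

lemma F_0: "F \<theta> 0 k = 1"
  by (simp add: F_def lrm_def)

lemma F_Suc: "F \<theta> (Suc n) k = (if Suc n \<le> k then \<theta> * F \<theta> n k else 0) + real n * F \<theta> n k"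
proof -
  let ?P = "{\<sigma>. \<sigma> permutes {1..n}}"
  let ?g = "\<lambda>p. if (\<forall>i. k < i \<and> i \<le> Suc n \<longrightarrow> \<not> is_lrm p i) then \<theta> ^ lrm (Suc n) p else 0"
  let ?f = "\<lambda>\<sigma>. if (\<forall>i. k < i \<and> i \<le> n \<longrightarrow> \<not> is_lrm \<sigma> i) then \<theta> ^ lrm n \<sigma> else 0"
  have F1: "F \<theta> (Suc n) k = (\<Sum>v\<in>{1..Suc n}. \<Sum>\<sigma>\<in>?P. ?g (ins n v \<sigma>))"
    unfolding F_def by (rule sum_perm_Suc)
  have cond: "(\<forall>i. k < i \<and> i \<le> Suc n \<longrightarrow> \<not> is_lrm (ins n v \<sigma>) i) \<longleftrightarrow>
      (k < Suc n \<longrightarrow> \<not> is_lrm (ins n v \<sigma>) (Suc n)) \<and> (\<forall>i. k < i \<and> i \<le> n \<longrightarrow> \<not> is_lrm \<sigma> i)"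
    if s: "\<sigma> permutes {1..n}" for v \<sigma>
  proof -
    have "(\<forall>i. k < i \<and> i \<le> n \<longrightarrow> \<not> is_lrm (ins n v \<sigma>) i) \<longleftrightarrow> (\<forall>i. k < i \<and> i \<le> n \<longrightarrow> \<not> is_lrm \<sigma> i)"
      using is_lrm_ins[OF s] by auto
    then show ?thesis by (auto simp: le_Suc_eq)
  qed
  have low: "?g (ins n v \<sigma>) = ?f \<sigma>" if s: "\<sigma> permutes {1..n}" and v: "v \<in> {1..n}" for v \<sigma>
  proof -
    have v': "v \<in> {1..Suc n}" using v by auto
    show ?thesis using cond[OF s, of v] is_lrm_ins_last[OF s v'] lrm_ins[OF s v'] v by auto
  qed
  have top: "?g (ins n (Suc n) \<sigma>) = (if Suc n \<le> k then \<theta> * ?f \<sigma> else 0)" if s: "\<sigma> permutes {1..n}" for \<sigma>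
  proof -
    have v': "Suc n \<in> {1..Suc n}" by auto
    show ?thesis using cond[OF s, of "Suc n"] is_lrm_ins_last[OF s v'] lrm_ins[OF s v'] by auto
  qed
  have "F \<theta> (Suc n) k = (\<Sum>\<sigma>\<in>?P. ?g (ins n (Suc n) \<sigma>)) + (\<Sum>v\<in>{1..n}. \<Sum>\<sigma>\<in>?P. ?g (ins n v \<sigma>))"
    unfolding F1 by (rule split_top)
  also have "(\<Sum>\<sigma>\<in>?P. ?g (ins n (Suc n) \<sigma>)) = (\<Sum>\<sigma>\<in>?P. if Suc n \<le> k then \<theta> * ?f \<sigma> else 0)"
    by (rule sum.cong) (auto simp: top)
  also have "\<dots> = (if Suc n \<le> k then \<theta> * F \<theta> n k else 0)"
    by (simp add: F_def sum_distrib_left)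
  also have "(\<Sum>v\<in>{1..n}. \<Sum>\<sigma>\<in>?P. ?g (ins n v \<sigma>)) = (\<Sum>v\<in>{1..n}. F \<theta> n k)"
    unfolding F_def by (rule sum.cong[OF refl], rule sum.cong) (auto simp: low)
  also have "\<dots> = real n * F \<theta> n k" by simp
  finally show ?thesis .
qed

lemma Ws_Suc: "Ws \<theta> (Suc n) k = real n * Ws \<theta> n k + (if k < Suc n then \<theta> * F \<theta> n k else 0)"
proof -
  let ?P = "{\<sigma>. \<sigma> permutes {1..n}}"
  let ?g = "\<lambda>p. if winnable (Suc n) k p then \<theta> ^ lrm (Suc n) p else 0"
  let ?f = "\<lambda>\<sigma>. if winnable n k \<sigma> then \<theta> ^ lrm n \<sigma> else 0"
  let ?h = "\<lambda>\<sigma>. if (\<forall>i. k < i \<and> i \<le> n \<longrightarrow> \<not> is_lrm \<sigma> i) then \<theta> ^ lrm n \<sigma> else 0"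
  have F1: "Ws \<theta> (Suc n) k = (\<Sum>v\<in>{1..Suc n}. \<Sum>\<sigma>\<in>?P. ?g (ins n v \<sigma>))"
    unfolding Ws_def by (rule sum_perm_Suc)
  have low: "?g (ins n v \<sigma>) = ?f \<sigma>" if s: "\<sigma> permutes {1..n}" and v: "v \<in> {1..n}" for v \<sigma>
  proof -
    have v': "v \<in> {1..Suc n}" using v by auto
    show ?thesis using winnable_ins_low[OF s v] lrm_ins[OF s v'] v by auto
  qed
  have top: "?g (ins n (Suc n) \<sigma>) = (if k < Suc n then \<theta> * ?h \<sigma> else 0)" if s: "\<sigma> permutes {1..n}" for \<sigma>
  proof -
    have v': "Suc n \<in> {1..Suc n}" by auto
    show ?thesis using winnable_ins_top[OF s] lrm_ins[OF s v'] by auto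
  qed
  have "Ws \<theta> (Suc n) k = (\<Sum>\<sigma>\<in>?P. ?g (ins n (Suc n) \<sigma>)) + (\<Sum>v\<in>{1..n}. \<Sum>\<sigma>\<in>?P. ?g (ins n v \<sigma>))"
    unfolding F1 by (rule split_top)
  also have "(\<Sum>\<sigma>\<in>?P. ?g (ins n (Suc n) \<sigma>)) = (\<Sum>\<sigma>\<in>?P. if k < Suc n then \<theta> * ?h \<sigma> else 0)"
    by (rule sum.cong) (auto simp: top)
  also have "\<dots> = (if k < Suc n then \<theta> * F \<theta> n k else 0)"
    by (simp add: F_def sum_distrib_left)
  also have "(\<Sum>v\<in>{1..n}. \<Sum>\<sigma>\<in>?P. ?g (ins n v \<sigma>)) = (\<Sum>v\<in>{1..n}. Ws \<theta> n k)"
    unfolding Ws_def by (rule sum.cong[OF refl], rule sum.cong) (auto simp: low)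
  also have "\<dots> = real n * Ws \<theta> n k" by simp
  finally show ?thesis by simp
qed

lemma W_Ws: "W \<theta> N k = Ws \<theta> N k"
proof (cases "N \<le> k")
  case True
  have "winnable N k p \<Longrightarrow> False" for p using True unfolding winnable_def by auto
  then have "Ws \<theta> N k = 0" unfolding Ws_def by (intro sum.neutral) auto
  then show ?thesis using True by (simp add: W_def)
next
  case False
  then show ?thesis by (simp add: W_def Ws_def sum.inter_filter[symmetric] finite_permutations)
qed

lemma F_low: "M \<le> k \<Longrightarrow> F \<theta> M k = pochhammer \<theta> M"
  by (induction M) (auto simp: F_0 F_Suc pochhammer_Suc algebra_simps)

lemma F_high: "1 \<le> k \<Longrightarrow> F \<theta> (k + d) k = fact (k + d - 1) / fact (k - 1) * pochhammer \<theta> k"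
proof (induction d)
  case 0 then show ?case by (simp add: F_low)
next
  case (Suc d)
  have "F \<theta> (k + Suc d) k = real (k + d) * F \<theta> (k + d) k"
    using F_Suc[of \<theta> "k + d" k] by simp
  also have "\<dots> = real (k + d) * (fact (k + d - 1) / fact (k - 1) * pochhammer \<theta> k)"
    using Suc by simp
  also have "\<dots> = fact (k + Suc d - 1) / fact (k - 1) * pochhammer \<theta> k"
  proof -
    have "fact (k + Suc d - 1) = real (k + d) * fact (k + d - 1)"
      using Suc.prems by (cases "k + d") (auto simp: fact_Suc)
    then show ?thesis by simp
  qed
  finally show ?case .
qed

theorem theorem4p3:
  fixes \<theta> :: real
  assumes "\<theta> > 0"
  shows "W \<theta> 1 0 = \<theta> \<and>
    (\<forall>N \<ge> 2.
       W \<theta> N 0 = real (N - 1) * W \<theta> (N - 1) 0 \<and>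
       (\<forall>k. 1 \<le> k \<and> k \<le> N - 1 \<longrightarrow>
          W \<theta> N k = real (N - 1) * W \<theta> (N - 1) k
                     + (fact (N - 2) / fact (k - 1)) * \<theta> * pochhammer \<theta> k))"
proof (intro conjI allI impI)
  show "W \<theta> 1 0 = \<theta>" using Ws_Suc[of \<theta> 0 0] by (simp add: W_Ws F_0)
next
  fix N :: nat assume N: "2 \<le> N"
  then obtain n where n: "N = Suc n" "1 \<le> n" by (cases N) auto
  have Fz: "F \<theta> (Suc m) 0 = 0" for m by (induction m) (simp_all add: F_Suc F_0)
  have "F \<theta> n 0 = 0" using n(2) Fz[of "n - 1"] by simp
  then show "W \<theta> N 0 = real (N - 1) * W \<theta> (N - 1) 0"
    using Ws_Suc[of \<theta> n 0] n by (simp add: W_Ws)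
  fix k assume k: "1 \<le> k \<and> k \<le> N - 1"
  have "F \<theta> (k + (n - k)) k = fact (k + (n - k) - 1) / fact (k - 1) * pochhammer \<theta> k"
    using k by (intro F_high) auto
  then have "F \<theta> n k = fact (N - 2) / fact (k - 1) * pochhammer \<theta> k" using k n by simp
  then show "W \<theta> N k = real (N - 1) * W \<theta> (N - 1) k
                     + (fact (N - 2) / fact (k - 1)) * \<theta> * pochhammer \<theta> k"
    using Ws_Suc[of \<theta> n k] n k by (simp add: W_Ws)
qed

end
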